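(* Let $\beta\in(0,1)$, $T>0$, and let $t_j=j\kappa$, $j=0,\dots,N$, be a uniform mesh of $[0,T]$ with $\kappa=T/N$. Let $u\in C^2[0,T]$ be real-valued, let $\hat u$ be the continuous piecewise linear interpolant of the values $u(t_j)$, and let $\Pi_1$ denote continuous piecewise linear interpolation at the nodes $t_j$. Then there is a constant $C$ independent of $\kappa$ and $t$ such that for $t\in(\kappa,T]$ \[ \int_0^t(t-\tau)^{\beta-1}\left|\Pi_1D_t^\beta\hat u(\tau)-D_t^\beta\hat u(\tau)\right|\,d\tau\leq C\kappa^{2-\beta}(t-\kappa)^{\beta-1}. \]
   Context: $D_t^\beta$ is the Caputo fractional derivative: $D_t^\beta g(t)=\frac{1}{\Gamma(1-\beta)}\int_0^t (t-\tau)^{-\beta} g'(\tau)\,d\tau$; $\Pi_1D_t^\beta\hat u$ is the piecewise linear interpolant of the continuous function $D_t^\beta\hat u$ at the mesh nodes. *)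

theory Defs
  imports "HOL-Analysis.Analysis"
begin

text \<open>Continuous piecewise linear interpolant of g at the uniform nodes
  t_j = j * kappa, j = 0..N (meaningful on [0, N*kappa], N >= 1).\<close>
definition pl_interp :: "real \<Rightarrow> nat \<Rightarrow> (real \<Rightarrow> real) \<Rightarrow> real \<Rightarrow> real" where
  "pl_interp kappa N g t =
     (let j = min (nat \<lfloor>t / kappa\<rfloor>) (N - 1)
      in g (real j * kappa) + (t - real j * kappa) / kappa *
           (g (real (Suc j) * kappa) - g (real j * kappa)))"

definition caputo :: "real \<Rightarrow> (real \<Rightarrow> real) \<Rightarrow> real \<Rightarrow> real" where
  "caputo beta g t =
     (1 / Gamma (1 - beta)) * integral {0..t} (\<lambda>\<tau>. (t - \<tau>) powr (- beta) * deriv g \<tau>)"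

end

theory Submission
  imports Defs
begin

lemma int_sing:
  fixes a b c \<gamma> :: real
  assumes "0 < \<gamma>" "a \<le> b" "b \<le> c"
  shows "((\<lambda>\<sigma>. (c - \<sigma>) powr (\<gamma> - 1)) has_integral
           (((c - a) powr \<gamma> - (c - b) powr \<gamma>) / \<gamma>)) {a..b}"
proof -
  define F where "F = (\<lambda>\<sigma>::real. (-1/\<gamma>) * (c - \<sigma>) powr \<gamma>)"
  have "((\<lambda>\<sigma>. (c - \<sigma>) powr (\<gamma> - 1)) has_integral (F b - F a)) {a..b}"
  proof (rule fundamental_theorem_of_calculus_interior[OF assms(2)])
    show "continuous_on {a..b} F" unfolding F_def
      using assms by (intro continuous_intros continuous_on_powr') (auto intro!: continuous_intros)
    fix x assume x: "x \<in> {a<..<b}"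
    have "((\<lambda>\<sigma>. (c - \<sigma>) powr \<gamma>) has_real_derivative \<gamma> * (c - x) powr (\<gamma> - of_nat 1) * (-1)) (at x)"
      by (rule DERIV_fun_powr) (use x assms in \<open>auto intro!: derivative_eq_intros\<close>)
    then have "(F has_real_derivative (-1/\<gamma>) * (\<gamma> * (c - x) powr (\<gamma> - of_nat 1) * (-1))) (at x)"
      unfolding F_def by (rule DERIV_cmult)
    then show "(F has_vector_derivative (c - x) powr (\<gamma> - 1)) (at x)"
      using assms by (simp add: has_real_derivative_iff_has_vector_derivative)
  qed
  then show ?thesis by (simp add: F_def diff_divide_distrib)
qed

lemma int_reg:
  fixes a b \<beta> :: real
  assumes "0 < \<beta>" "0 < a" "a \<le> b"
  shows "((\<lambda>\<sigma>. \<sigma> powr (- 1 - \<beta>)) has_integral ((a powr (-\<beta>) - b powr (-\<beta>)) / \<beta>)) {a..b}"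
proof -
  define F where "F = (\<lambda>\<sigma>::real. (-1/\<beta>) * \<sigma> powr (-\<beta>))"
  have "((\<lambda>\<sigma>. \<sigma> powr (- 1 - \<beta>)) has_integral (F b - F a)) {a..b}"
  proof (rule fundamental_theorem_of_calculus_interior[OF assms(3)])
    show "continuous_on {a..b} F" unfolding F_def
      using assms by (intro continuous_intros) auto
    fix x assume x: "x \<in> {a<..<b}"
    have "((\<lambda>\<sigma>. \<sigma> powr (-\<beta>)) has_real_derivative (-\<beta>) * x powr (-\<beta> - of_nat 1) * 1) (at x)"
      by (rule DERIV_fun_powr) (use x assms in \<open>auto intro!: derivative_eq_intros\<close>)
    then have "(F has_real_derivative (-1/\<beta>) * ((-\<beta>) * x powr (-\<beta> - of_nat 1) * 1)) (at x)"
      unfolding F_def by (rule DERIV_cmult)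
    then show "(F has_vector_derivative x powr (- 1 - \<beta>)) (at x)"
    proof -
      have e: "- \<beta> - of_nat 1 = - 1 - \<beta>" by simp
      have "(-1/\<beta>) * ((-\<beta>) * x powr (-\<beta> - of_nat 1) * 1) = x powr (- 1 - \<beta>)"
        unfolding e using assms by simp
      then show ?thesis using \<open>(F has_real_derivative _) _\<close>
        by (simp add: has_real_derivative_iff_has_vector_derivative)
    qed
  qed
  then show ?thesis by (simp add: F_def diff_divide_distrib)
qed

definition Phi :: "real \<Rightarrow> real \<Rightarrow> real" where
  "Phi \<beta> x = (max x 0) powr (1 - \<beta>) / (1 - \<beta>)"

lemma Phi_nonpos: "x \<le> 0 \<Longrightarrow> Phi \<beta> x = 0"
  by (simp add: Phi_def max_def)

lemma Phi_pos: "0 \<le> x \<Longrightarrow> Phi \<beta> x = x powr (1 - \<beta>) / (1 - \<beta>)"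
  by (simp add: Phi_def max_def)

lemma Phi_deriv:
  fixes y \<beta> :: real
  assumes "0 < y" "\<beta> < 1"
  shows "DERIV (Phi \<beta>) y :> y powr (- \<beta>)"
proof -
  have "DERIV (\<lambda>y. y powr (1 - \<beta>)) y :> (1 - \<beta>) * y powr ((1 - \<beta>) - of_nat 1) * 1"
    by (rule DERIV_fun_powr[OF DERIV_ident]) (use assms in simp)
  then have "DERIV (\<lambda>y. y powr (1 - \<beta>) / (1 - \<beta>)) y :> (1 - \<beta>) * y powr ((1 - \<beta>) - of_nat 1) * 1 / (1 - \<beta>)"
    by (rule DERIV_cdivide)
  then have d: "DERIV (\<lambda>y. y powr (1 - \<beta>) / (1 - \<beta>)) y :> y powr (- \<beta>)"
    using assms by simp
  show ?thesis
    by (rule has_field_derivative_transform_within_open[OF d, of "{0<..}"])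
       (use assms in \<open>auto simp: Phi_pos\<close>)
qed

lemma negpow_deriv:
  fixes y \<beta> :: real
  assumes "0 < y"
  shows "DERIV (\<lambda>y. y powr (- \<beta>)) y :> (- \<beta>) * y powr (- 1 - \<beta>)"
proof -
  have e: "- \<beta> - 1 = - 1 - \<beta>" by simp
  show ?thesis using has_real_derivative_powr[OF assms, of "-\<beta>"] unfolding e .
qed

lemma decay_mvt:
  fixes a \<kappa> \<beta> :: real
  assumes "0 < a" "0 < \<kappa>" "0 < \<beta>"
  shows "a powr (-\<beta>) - (a + \<kappa>) powr (-\<beta>) \<le> \<beta> * \<kappa> * a powr (- 1 - \<beta>)"
proof -
  have der: "DERIV (\<lambda>y. y powr (- \<beta>)) x :> (- \<beta>) * x powr (- 1 - \<beta>)"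
    if "a \<le> x" "x \<le> a + \<kappa>" for x
    using negpow_deriv[of x \<beta>] that assms by simp
  obtain z where z: "a < z" "z < a + \<kappa>"
    "(a + \<kappa>) powr (-\<beta>) - a powr (-\<beta>) = (a + \<kappa> - a) * ((- \<beta>) * z powr (- 1 - \<beta>))"
    using MVT2[of a "a + \<kappa>" "\<lambda>y. y powr (- \<beta>)" "\<lambda>y. (- \<beta>) * y powr (- 1 - \<beta>)", OF _ der]
      assms by auto
  have "z powr (- 1 - \<beta>) \<le> a powr (- 1 - \<beta>)"
    by (rule powr_mono2') (use z assms in auto)
  then have "\<beta> * \<kappa> * z powr (- 1 - \<beta>) \<le> \<beta> * \<kappa> * a powr (- 1 - \<beta>)"
    using assms by (intro mult_left_mono) auto
  then show ?thesis using z(3) by (simp add: algebra_simps)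
qed

lemma E_neg:
  assumes "a + \<kappa> \<le> 0" "0 \<le> x" "x \<le> \<kappa>"
  shows "Phi \<beta> a + x / \<kappa> * (Phi \<beta> (a + \<kappa>) - Phi \<beta> a) - Phi \<beta> (a + x) = 0"
  using assms by (simp add: Phi_nonpos)

lemma E_zero:
  fixes \<kappa> x \<beta> :: real
  assumes "0 < \<kappa>" "0 \<le> x" "x \<le> \<kappa>" "\<beta> < 1"
  shows "\<bar>Phi \<beta> 0 + x / \<kappa> * (Phi \<beta> (0 + \<kappa>) - Phi \<beta> 0) - Phi \<beta> (0 + x)\<bar>
          \<le> \<kappa> powr (1 - \<beta>) / (1 - \<beta>)"
proof -
  define M where "M = \<kappa> powr (1 - \<beta>) / (1 - \<beta>)"
  have M0: "0 \<le> M" unfolding M_def using assms by simp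
  have l: "x / \<kappa> \<le> 1" "0 \<le> x / \<kappa>" using assms by auto
  have p: "0 \<le> x / \<kappa> * M" "x / \<kappa> * M \<le> M"
    using mult_nonneg_nonneg[OF l(2) M0] mult_left_le_one_le[OF M0 l(2) l(1)] by auto
  have "x powr (1 - \<beta>) \<le> \<kappa> powr (1 - \<beta>)"
    using assms by (intro powr_mono2) auto
  then have "x powr (1 - \<beta>) / (1 - \<beta>) \<le> M"
    unfolding M_def by (rule divide_right_mono) (use assms in simp)
  then have q: "0 \<le> Phi \<beta> x" "Phi \<beta> x \<le> M"
    using assms by (simp_all add: Phi_pos)
  have P0: "Phi \<beta> 0 = 0" by (simp add: Phi_nonpos)
  have Pk: "Phi \<beta> \<kappa> = M" unfolding M_def using assms by (simp add: Phi_pos)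
  show ?thesis unfolding M_def[symmetric] using p q by (simp add: P0 Pk abs_le_iff)
qed

lemma E_pos:
  fixes a \<kappa> x \<beta> :: real
  assumes "0 < a" "0 < \<kappa>" "0 \<le> x" "x \<le> \<kappa>" "0 < \<beta>" "\<beta> < 1"
  shows "\<bar>Phi \<beta> a + x / \<kappa> * (Phi \<beta> (a + \<kappa>) - Phi \<beta> a) - Phi \<beta> (a + x)\<bar>
          \<le> \<kappa> * (a powr (-\<beta>) - (a + \<kappa>) powr (-\<beta>))"
proof (cases "x = 0")
  case True
  have "(a + \<kappa>) powr (-\<beta>) \<le> a powr (-\<beta>)"
    by (rule powr_mono2') (use assms in auto)
  then show ?thesis using True assms by simp
next
  case False
  then have x: "0 < x" using assms by simp
  have der: "DERIV (Phi \<beta>) y :> y powr (- \<beta>)" if "a \<le> y" for y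
    using Phi_deriv[of y \<beta>] that assms by simp
  obtain z1 where z1: "a < z1" "z1 < a + x"
    "Phi \<beta> (a + x) - Phi \<beta> a = (a + x - a) * z1 powr (- \<beta>)"
    using MVT2[of a "a + x" "Phi \<beta>" "\<lambda>y. y powr (- \<beta>)", OF _ der] x by auto
  obtain z2 where z2: "a < z2" "z2 < a + \<kappa>"
    "Phi \<beta> (a + \<kappa>) - Phi \<beta> a = (a + \<kappa> - a) * z2 powr (- \<beta>)"
    using MVT2[of a "a + \<kappa>" "Phi \<beta>" "\<lambda>y. y powr (- \<beta>)", OF _ der] assms by auto
  have b1: "(a + \<kappa>) powr (-\<beta>) \<le> z1 powr (-\<beta>)" "z1 powr (-\<beta>) \<le> a powr (-\<beta>)"
    using z1 assms by (auto intro!: powr_mono2')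
  have b2: "(a + \<kappa>) powr (-\<beta>) \<le> z2 powr (-\<beta>)" "z2 powr (-\<beta>) \<le> a powr (-\<beta>)"
    using z2 assms by (auto intro!: powr_mono2')
  have E: "Phi \<beta> a + x / \<kappa> * (Phi \<beta> (a + \<kappa>) - Phi \<beta> a) - Phi \<beta> (a + x)
      = x * (z2 powr (-\<beta>) - z1 powr (-\<beta>))"
  proof -
    have "x / \<kappa> * (Phi \<beta> (a + \<kappa>) - Phi \<beta> a) = x * z2 powr (- \<beta>)"
      using z2(3) assms by simp
    moreover have "Phi \<beta> (a + x) = Phi \<beta> a + x * z1 powr (- \<beta>)"
      using z1(3) by simp
    ultimately show ?thesis by (simp add: algebra_simps)
  qed
  have "\<bar>z2 powr (-\<beta>) - z1 powr (-\<beta>)\<bar> \<le> a powr (-\<beta>) - (a + \<kappa>) powr (-\<beta>)"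
    using b1 b2 by (simp add: abs_le_iff)
  then have "x * \<bar>z2 powr (-\<beta>) - z1 powr (-\<beta>)\<bar> \<le> \<kappa> * (a powr (-\<beta>) - (a + \<kappa>) powr (-\<beta>))"
    using assms by (intro mult_mono) auto
  then show ?thesis unfolding E using x by (simp add: abs_mult)
qed

lemma telescope_k:
  fixes \<kappa> \<beta> :: real and k :: nat
  assumes "1 \<le> k"
  shows "(\<Sum>j\<in>{1..<k}. ((real k - real j) * \<kappa>) powr (-\<beta>) - ((real k - real j + 1) * \<kappa>) powr (-\<beta>))
         = \<kappa> powr (-\<beta>) - (real k * \<kappa>) powr (-\<beta>)"
proof -
  obtain k' where k: "k = Suc k'" using assms by (cases k) auto
  define g where "g = (\<lambda>j::nat. ((real k - real j) * \<kappa>) powr (-\<beta>))"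
  have "(\<Sum>j\<in>{1..<k}. ((real k - real j) * \<kappa>) powr (-\<beta>) - ((real k - real j + 1) * \<kappa>) powr (-\<beta>))
      = (\<Sum>j\<in>{Suc 0..<Suc k'}. g j - g (j - 1))"
    unfolding k g_def by (intro sum.cong) auto
  also have "\<dots> = (\<Sum>i\<in>{0..<k'}. g (Suc i) - g i)"
    by (subst sum.shift_bounds_Suc_ivl) simp
  also have "\<dots> = g k' - g 0"
    using sum_lessThan_telescope[of g k'] by (simp add: atLeast0LessThan)
  also have "\<dots> = \<kappa> powr (-\<beta>) - (real k * \<kappa>) powr (-\<beta>)"
    unfolding g_def k by simp
  finally show ?thesis .
qed

lemma sum_err_bound:
  fixes \<kappa> \<beta> x M1 M2 :: real and k N :: nat and d :: "nat \<Rightarrow> real"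
  assumes "0 < \<kappa>" "0 < \<beta>" "\<beta> < 1" "0 \<le> x" "x \<le> \<kappa>" "k < N"
    and d0: "\<bar>d 0\<bar> \<le> M1" and dj: "\<And>j. 1 \<le> j \<Longrightarrow> j < N \<Longrightarrow> \<bar>d j\<bar> \<le> \<kappa> * M2"
  shows "(\<Sum>j<N. \<bar>d j\<bar> * \<bar>Phi \<beta> ((real k - real j) * \<kappa>)
            + x / \<kappa> * (Phi \<beta> ((real k - real j) * \<kappa> + \<kappa>) - Phi \<beta> ((real k - real j) * \<kappa>))
            - Phi \<beta> ((real k - real j) * \<kappa> + x)\<bar>)
         \<le> (if k = 0 then M1 * (\<kappa> powr (1 - \<beta>) / (1 - \<beta>))
            else M1 * (\<beta> * \<kappa> * \<kappa> * (real k * \<kappa>) powr (- 1 - \<beta>))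
                 + M2 * \<kappa> powr (2 - \<beta>) * (1 / (1 - \<beta>) + 1))"
proof -
  define a where "a = (\<lambda>j::nat. (real k - real j) * \<kappa>)"
  define E where "E = (\<lambda>j. Phi \<beta> (a j) + x / \<kappa> * (Phi \<beta> (a j + \<kappa>) - Phi \<beta> (a j)) - Phi \<beta> (a j + x))"
  define b where "b = (\<lambda>j. if k < j then 0 else if j = k then \<bar>d j\<bar> * (\<kappa> powr (1 - \<beta>) / (1 - \<beta>))
                  else \<bar>d j\<bar> * (\<kappa> * (a j powr (-\<beta>) - (a j + \<kappa>) powr (-\<beta>))))"
  have M1: "0 \<le> M1" using d0 by linarith
  have Eb: "\<bar>d j\<bar> * \<bar>E j\<bar> \<le> b j" for j
  proof -
    consider "k < j" | "j = k" | "j < k" by linarith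
    then show ?thesis
    proof cases
      case 1
      have "real k + 1 \<le> real j" using 1 by linarith
      moreover have "a j + \<kappa> = (real k + 1 - real j) * \<kappa>" by (simp add: a_def algebra_simps)
      ultimately have "a j + \<kappa> \<le> 0" using assms by (simp add: mult_nonpos_nonneg)
      then have "E j = 0" unfolding E_def using E_neg assms by blast
      then show ?thesis using 1 unfolding b_def by simp
    next
      case 2
      then have "a j = 0" unfolding a_def by simp
      then have ej: "\<bar>E j\<bar> \<le> \<kappa> powr (1 - \<beta>) / (1 - \<beta>)" unfolding E_def using E_zero assms by simp
      show ?thesis using 2 mult_left_mono[OF ej abs_ge_zero[of "d j"]] unfolding b_def by simp
    next
      case 3
      then have "0 < a j" unfolding a_def using assms by simp
      then have "\<bar>E j\<bar> \<le> \<kappa> * (a j powr (-\<beta>) - (a j + \<kappa>) powr (-\<beta>))"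
        unfolding E_def using E_pos assms by simp
      note ej = this
      show ?thesis using 3 mult_left_mono[OF ej abs_ge_zero[of "d j"]] unfolding b_def by simp
    qed
  qed
  have "(\<Sum>j<N. \<bar>d j\<bar> * \<bar>E j\<bar>) \<le> (\<Sum>j<N. b j)"
    by (intro sum_mono Eb)
  also have "(\<Sum>j<N. b j) = (\<Sum>j<Suc k. b j)"
  proof -
    have "(\<Sum>j<N. b j) = (\<Sum>j<Suc k. b j) + (\<Sum>j\<in>{Suc k..<N}. b j)"
    proof -
      have "(\<Sum>j<N. b j) = (\<Sum>j\<in>{0..<N}. b j)" by (simp add: atLeast0LessThan)
      also have "\<dots> = (\<Sum>j\<in>{0..<Suc k}. b j) + (\<Sum>j\<in>{Suc k..<N}. b j)"
        using assms(6) by (intro sum.atLeastLessThan_concat[symmetric]) auto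
      finally show ?thesis by (simp add: atLeast0LessThan)
    qed
    moreover have "(\<Sum>j\<in>{Suc k..<N}. b j) = 0" unfolding b_def by (intro sum.neutral) auto
    ultimately show ?thesis by simp
  qed
  also have "\<dots> \<le> (if k = 0 then M1 * (\<kappa> powr (1 - \<beta>) / (1 - \<beta>))
            else M1 * (\<beta> * \<kappa> * \<kappa> * (real k * \<kappa>) powr (- 1 - \<beta>))
                 + M2 * \<kappa> powr (2 - \<beta>) * (1 / (1 - \<beta>) + 1))"
  proof (cases "k = 0")
    case True
    have "\<bar>d 0\<bar> * (\<kappa> powr (1 - \<beta>) / (1 - \<beta>)) \<le> M1 * (\<kappa> powr (1 - \<beta>) / (1 - \<beta>))"
      by (rule mult_right_mono[OF d0]) (use assms in simp)
    then show ?thesis unfolding b_def using True by simp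
  next
    case False
    have pk: "0 \<le> \<kappa> powr (1 - \<beta>) / (1 - \<beta>)" using assms by simp
    have sk: "(\<Sum>j<Suc k. b j) = b 0 + (\<Sum>j\<in>{1..<k}. b j) + b k"
    proof -
      have "(\<Sum>j<Suc k. b j) = (\<Sum>j<k. b j) + b k" by simp
      moreover have "(\<Sum>j<k. b j) = b 0 + (\<Sum>j\<in>{1..<k}. b j)"
        using False by (subst atLeast0LessThan[symmetric], subst sum.atLeast_Suc_lessThan) auto
      ultimately show ?thesis by simp
    qed
    have b0: "b 0 \<le> M1 * (\<beta> * \<kappa> * \<kappa> * (real k * \<kappa>) powr (- 1 - \<beta>))"
    proof -
      have a0: "a 0 = real k * \<kappa>" "0 < a 0" unfolding a_def using False assms by auto
      have dm: "a 0 powr (-\<beta>) - (a 0 + \<kappa>) powr (-\<beta>) \<le> \<beta> * \<kappa> * a 0 powr (- 1 - \<beta>)"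
        by (rule decay_mvt) (use a0 assms in auto)
      then have "\<kappa> * (a 0 powr (-\<beta>) - (a 0 + \<kappa>) powr (-\<beta>)) \<le> \<beta> * \<kappa> * \<kappa> * (real k * \<kappa>) powr (- 1 - \<beta>)"
        using mult_left_mono[OF dm, of \<kappa>] assms a0 by (simp add: algebra_simps)
      moreover have "(a 0 + \<kappa>) powr (-\<beta>) \<le> a 0 powr (-\<beta>)"
        by (rule powr_mono2') (use a0 assms in auto)
      then have "0 \<le> \<kappa> * (a 0 powr (-\<beta>) - (a 0 + \<kappa>) powr (-\<beta>))"
        using assms by simp
      ultimately show ?thesis unfolding b_def using False d0 M1
        by (simp add: mult_mono)
    qed
    have bk: "b k \<le> M2 * \<kappa> powr (2 - \<beta>) * (1 / (1 - \<beta>))"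
    proof -
      have "\<bar>d k\<bar> \<le> \<kappa> * M2" using dj False assms by simp
      then have "b k \<le> (\<kappa> * M2) * (\<kappa> powr (1 - \<beta>) / (1 - \<beta>))"
        unfolding b_def using mult_right_mono[OF _ pk] by simp
      also have "\<dots> = M2 * (\<kappa> * \<kappa> powr (1 - \<beta>)) * (1 / (1 - \<beta>))" by simp
      also have "\<kappa> * \<kappa> powr (1 - \<beta>) = \<kappa> powr (2 - \<beta>)"
        using assms by (simp add: powr_add[symmetric] powr_mult_base)
      finally show ?thesis .
    qed
    have bmid: "(\<Sum>j\<in>{1..<k}. b j) \<le> M2 * \<kappa> powr (2 - \<beta>)"
    proof -
      have "(\<Sum>j\<in>{1..<k}. b j) \<le> (\<Sum>j\<in>{1..<k}. (\<kappa> * M2) * (\<kappa> * (((real k - real j) * \<kappa>) powr (-\<beta>) - ((real k - real j + 1) * \<kappa>) powr (-\<beta>))))"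
      proof (intro sum_mono)
        fix j assume j: "j \<in> {1..<k}"
        have aj: "0 < a j" "a j + \<kappa> = (real k - real j + 1) * \<kappa>" unfolding a_def using j assms
          by (auto simp: algebra_simps)
        have "(a j + \<kappa>) powr (-\<beta>) \<le> a j powr (-\<beta>)"
          by (rule powr_mono2') (use aj assms in auto)
        then have nn: "0 \<le> \<kappa> * (a j powr (-\<beta>) - (a j + \<kappa>) powr (-\<beta>))"
          using assms by simp
        have "\<bar>d j\<bar> \<le> \<kappa> * M2" using dj j assms by simp
        then have "b j \<le> (\<kappa> * M2) * (\<kappa> * (a j powr (-\<beta>) - (a j + \<kappa>) powr (-\<beta>)))"
          unfolding b_def using j nn by (simp add: mult_right_mono)
        then show "b j \<le> (\<kappa> * M2) * (\<kappa> * (((real k - real j) * \<kappa>) powr (-\<beta>) - ((real k - real j + 1) * \<kappa>) powr (-\<beta>)))"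
          using aj(2) unfolding a_def by simp
      qed
      also have "\<dots> = (\<kappa> * M2) * \<kappa> * (\<Sum>j\<in>{1..<k}. ((real k - real j) * \<kappa>) powr (-\<beta>) - ((real k - real j + 1) * \<kappa>) powr (-\<beta>))"
        by (simp add: sum_distrib_left mult.assoc)
      also have "\<dots> = (\<kappa> * M2) * \<kappa> * (\<kappa> powr (-\<beta>) - (real k * \<kappa>) powr (-\<beta>))"
        using telescope_k False by simp
      also have "\<dots> \<le> (\<kappa> * M2) * \<kappa> * \<kappa> powr (-\<beta>)"
      proof -
        have "0 \<le> \<kappa> * M2" using dj[of k] False assms(6) by force
        then have "0 \<le> M2" using assms by (simp add: zero_le_mult_iff)
        moreover have "0 \<le> (real k * \<kappa>) powr (-\<beta>)" by simp
        ultimately show ?thesis using assms by (simp add: algebra_simps mult_left_mono)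
      qed
      also have "\<dots> = M2 * \<kappa> powr (2 - \<beta>)"
      proof -
        have "\<kappa> powr (2 - \<beta>) = \<kappa> powr (1 + (1 + - \<beta>))"
          by (rule arg_cong[where f="\<lambda>e. \<kappa> powr e"]) simp
        also have "\<dots> = \<kappa> * \<kappa> * \<kappa> powr (-\<beta>)"
          using assms by (simp only: powr_add powr_one_gt_zero_iff mult.assoc) simp
        finally have "\<kappa> * \<kappa> * \<kappa> powr (-\<beta>) = \<kappa> powr (2 - \<beta>)" by simp
        then show ?thesis by (simp add: algebra_simps)
      qed
      finally show ?thesis .
    qed
    show ?thesis using False sk b0 bk bmid by (simp add: algebra_simps)
  qed
  finally show ?thesis unfolding E_def a_def .
qed

lemma floor_node:
  fixes \<kappa> \<sigma> :: real
  assumes "0 < \<kappa>" "real j * \<kappa> \<le> \<sigma>" "\<sigma> < real (Suc j) * \<kappa>"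
  shows "\<lfloor>\<sigma> / \<kappa>\<rfloor> = int j"
proof (rule floor_unique)
  show "real_of_int (int j) \<le> \<sigma> / \<kappa>" using assms by (simp add: pos_le_divide_eq)
  show "\<sigma> / \<kappa> < real_of_int (int j) + 1" using assms by (simp add: pos_divide_less_eq algebra_simps)
qed

lemma pl_index:
  fixes \<kappa> \<tau> :: real
  assumes "0 < \<kappa>" "1 \<le> N" "0 \<le> \<tau>" "\<tau> \<le> real N * \<kappa>"
  defines "n \<equiv> min (nat \<lfloor>\<tau> / \<kappa>\<rfloor>) (N - 1)"
  shows "n < N" "real n * \<kappa> \<le> \<tau>" "\<tau> \<le> real (Suc n) * \<kappa>"
proof -
  show "n < N" unfolding n_def using assms by auto
  have fl: "real_of_int \<lfloor>\<tau> / \<kappa>\<rfloor> \<le> \<tau> / \<kappa>" "\<tau> / \<kappa> < real_of_int \<lfloor>\<tau> / \<kappa>\<rfloor> + 1"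
    by simp_all
  have f0: "0 \<le> \<lfloor>\<tau> / \<kappa>\<rfloor>" using assms by simp
  have "real n \<le> \<tau> / \<kappa>"
    unfolding n_def using fl f0 by (simp add: min_def) linarith
  then show "real n * \<kappa> \<le> \<tau>" using assms by (simp add: pos_le_divide_eq)
  show "\<tau> \<le> real (Suc n) * \<kappa>"
  proof (cases "nat \<lfloor>\<tau> / \<kappa>\<rfloor> \<le> N - 1")
    case True
    then have "n = nat \<lfloor>\<tau> / \<kappa>\<rfloor>" unfolding n_def by simp
    then have "real (Suc n) = real_of_int \<lfloor>\<tau> / \<kappa>\<rfloor> + 1" using f0 by simp
    then have "\<tau> / \<kappa> \<le> real (Suc n)" using fl by linarith
    then show ?thesis using assms by (simp add: pos_divide_le_eq)
  next
    case False
    then have "n = N - 1" unfolding n_def by simp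
    then have "real (Suc n) = real N" using assms by simp
    then show ?thesis using assms by simp
  qed
qed

lemma pl_interp_eq:
  fixes \<kappa> \<tau> :: real
  shows "pl_interp \<kappa> N g \<tau> = (let n = min (nat \<lfloor>\<tau> / \<kappa>\<rfloor>) (N - 1) in
     g (real n * \<kappa>) + (\<tau> - real n * \<kappa>) / \<kappa> * (g (real (Suc n) * \<kappa>) - g (real n * \<kappa>)))"
  unfolding pl_interp_def by simp

lemma uh_local:
  fixes \<kappa> \<sigma> :: real
  assumes "0 < \<kappa>" "j < N" "real j * \<kappa> \<le> \<sigma>" "\<sigma> < real (Suc j) * \<kappa>"
  shows "pl_interp \<kappa> N u \<sigma> = u (real j * \<kappa>) + (\<sigma> - real j * \<kappa>) / \<kappa> * (u (real (Suc j) * \<kappa>) - u (real j * \<kappa>))"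
proof -
  have "min (nat \<lfloor>\<sigma> / \<kappa>\<rfloor>) (N - 1) = j" using floor_node[OF assms(1,3,4)] assms(2) by simp
  then show ?thesis unfolding pl_interp_def Let_def by simp
qed

lemma deriv_uh:
  fixes \<kappa> \<sigma> :: real
  assumes "0 < \<kappa>" "j < N" "real j * \<kappa> < \<sigma>" "\<sigma> < real (Suc j) * \<kappa>"
  shows "deriv (pl_interp \<kappa> N u) \<sigma> = (u (real (Suc j) * \<kappa>) - u (real j * \<kappa>)) / \<kappa>"
proof -
  define L where "L = (\<lambda>x. u (real j * \<kappa>) + (x - real j * \<kappa>) * ((u (real (Suc j) * \<kappa>) - u (real j * \<kappa>)) / \<kappa>))"
  have dL: "(L has_field_derivative (u (real (Suc j) * \<kappa>) - u (real j * \<kappa>)) / \<kappa>) (at \<sigma>)"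
    unfolding L_def using assms(1) by (auto intro!: derivative_eq_intros)
  have "(pl_interp \<kappa> N u has_field_derivative (u (real (Suc j) * \<kappa>) - u (real j * \<kappa>)) / \<kappa>) (at \<sigma>)"
  proof (rule has_field_derivative_transform_within_open[OF dL, of "{real j * \<kappa> <..< real (Suc j) * \<kappa>}"])
    fix x assume "x \<in> {real j * \<kappa><..<real (Suc j) * \<kappa>}"
    then show "L x = pl_interp \<kappa> N u x" unfolding L_def using uh_local[of \<kappa> j N x u] assms by auto
  qed (use assms in auto)
  then show ?thesis by (rule DERIV_imp_deriv)
qed

lemma abel_sum:
  fixes s P :: "nat \<Rightarrow> real"
  shows "(\<Sum>j<n. s j * (P j - P (Suc j))) + s n * P n
         = (\<Sum>j<Suc n. (if j = 0 then s 0 else s j - s (j - 1)) * P j)"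
proof (induction n)
  case 0
  then show ?case by simp
next
  case (Suc n)
  have "(\<Sum>j<Suc n. s j * (P j - P (Suc j))) + s (Suc n) * P (Suc n)
      = ((\<Sum>j<n. s j * (P j - P (Suc j))) + s n * P n) + (s (Suc n) - s n) * P (Suc n)"
    by (simp add: algebra_simps)
  also have "\<dots> = (\<Sum>j<Suc (Suc n). (if j = 0 then s 0 else s j - s (j - 1)) * P j)"
    using Suc by simp
  finally show ?case .
qed

lemma caputo_piece:
  fixes \<kappa> \<beta> \<tau> b :: real
  assumes "0 < \<kappa>" "0 < \<beta>" "\<beta> < 1" "j < N"
    "real j * \<kappa> \<le> b" "b \<le> real (Suc j) * \<kappa>" "b \<le> \<tau>"
  shows "((\<lambda>\<sigma>. (\<tau> - \<sigma>) powr (- \<beta>) * deriv (pl_interp \<kappa> N u) \<sigma>) has_integral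
          ((\<tau> - real j * \<kappa>) powr (1 - \<beta>) - (\<tau> - b) powr (1 - \<beta>)) / (1 - \<beta>)
            * ((u (real (Suc j) * \<kappa>) - u (real j * \<kappa>)) / \<kappa>)) {real j * \<kappa>..b}"
proof -
  let ?s = "(u (real (Suc j) * \<kappa>) - u (real j * \<kappa>)) / \<kappa>"
  have e: "(1 - \<beta>) - 1 = - \<beta>" by simp
  have "((\<lambda>\<sigma>. (\<tau> - \<sigma>) powr (- \<beta>)) has_integral
          ((\<tau> - real j * \<kappa>) powr (1 - \<beta>) - (\<tau> - b) powr (1 - \<beta>)) / (1 - \<beta>)) {real j * \<kappa>..b}"
    using int_sing[of "1 - \<beta>" "real j * \<kappa>" b \<tau>] assms unfolding e by simp
  then have h: "((\<lambda>\<sigma>. (\<tau> - \<sigma>) powr (- \<beta>) * ?s) has_integral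
          ((\<tau> - real j * \<kappa>) powr (1 - \<beta>) - (\<tau> - b) powr (1 - \<beta>)) / (1 - \<beta>) * ?s) {real j * \<kappa>..b}"
    by (rule has_integral_mult_left)
  show ?thesis
  proof (rule has_integral_spike_finite[OF _ _ h, of "{real j * \<kappa>, b}"])
    fix \<sigma> assume "\<sigma> \<in> {real j * \<kappa>..b} - {real j * \<kappa>, b}"
    then have "real j * \<kappa> < \<sigma>" "\<sigma> < real (Suc j) * \<kappa>" using assms by auto
    then show "(\<tau> - \<sigma>) powr (- \<beta>) * deriv (pl_interp \<kappa> N u) \<sigma> = (\<tau> - \<sigma>) powr (- \<beta>) * ?s"
      using deriv_uh[of \<kappa> j N \<sigma> u] assms by simp
  qed simp
qed

lemma caputo_uh:
  fixes \<kappa> \<beta> \<tau> :: real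
  assumes "0 < \<kappa>" "1 \<le> N" "0 < \<beta>" "\<beta> < 1" "0 \<le> \<tau>" "\<tau> \<le> real N * \<kappa>"
  shows "caputo \<beta> (pl_interp \<kappa> N u) \<tau> = (1 / Gamma (1 - \<beta>)) *
     (\<Sum>j<N. (if j = 0 then (u (real (Suc 0) * \<kappa>) - u (real 0 * \<kappa>)) / \<kappa>
               else (u (real (Suc j) * \<kappa>) - u (real j * \<kappa>)) / \<kappa> - (u (real (Suc (j - 1)) * \<kappa>) - u (real (j - 1) * \<kappa>)) / \<kappa>)
              * Phi \<beta> (\<tau> - real j * \<kappa>))"
proof -
  define s where "s = (\<lambda>j. (u (real (Suc j) * \<kappa>) - u (real j * \<kappa>)) / \<kappa>)"
  define f where "f = (\<lambda>\<sigma>. (\<tau> - \<sigma>) powr (- \<beta>) * deriv (pl_interp \<kappa> N u) \<sigma>)"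
  define n where "n = min (nat \<lfloor>\<tau> / \<kappa>\<rfloor>) (N - 1)"
  have n: "n < N" "real n * \<kappa> \<le> \<tau>" "\<tau> \<le> real (Suc n) * \<kappa>"
    using pl_index[OF assms(1,2,5,6)] unfolding n_def by auto
  define P where "P = (\<lambda>j. Phi \<beta> (\<tau> - real j * \<kappa>))"
  have Pj: "P j = (\<tau> - real j * \<kappa>) powr (1 - \<beta>) / (1 - \<beta>)" if "j \<le> n" for j
  proof -
    have "real j * \<kappa> \<le> real n * \<kappa>" using that assms by (simp add: mult_right_mono)
    then show ?thesis unfolding P_def using n by (simp add: Phi_pos)
  qed
  have assem: "(f has_integral (\<Sum>j<m. s j * (P j - P (Suc j)))) {0..real m * \<kappa>}" if "m \<le> n" for m
    using that
  proof (induction m)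
    case 0
    then show ?case using has_integral_refl(2)[of f 0] by simp
  next
    case (Suc m)
    have piece: "(f has_integral ((\<tau> - real m * \<kappa>) powr (1 - \<beta>) - (\<tau> - real (Suc m) * \<kappa>) powr (1 - \<beta>)) / (1 - \<beta>) * s m)
        {real m * \<kappa>..real (Suc m) * \<kappa>}"
    proof -
      have "real (Suc m) * \<kappa> \<le> real n * \<kappa>" using Suc.prems assms by (simp add: mult_right_mono)
      then have le: "real (Suc m) * \<kappa> \<le> \<tau>" using n(2) by linarith
      have "m < N" using Suc.prems n by simp
      from caputo_piece[of \<kappa> \<beta> m N "real (Suc m) * \<kappa>" \<tau> u, OF assms(1,3,4) this _ _ le]
      show ?thesis unfolding f_def s_def using assms by (simp add: mult_right_mono)
    qed
    have val: "((\<tau> - real m * \<kappa>) powr (1 - \<beta>) - (\<tau> - real (Suc m) * \<kappa>) powr (1 - \<beta>)) / (1 - \<beta>) * s m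
        = s m * (P m - P (Suc m))"
      using Pj[of m] Pj[of "Suc m"] Suc.prems by (simp add: diff_divide_distrib algebra_simps)
    have "(f has_integral (\<Sum>j<m. s j * (P j - P (Suc j))) + s m * (P m - P (Suc m))) {0..real (Suc m) * \<kappa>}"
    proof (rule has_integral_combine[of 0 "real m * \<kappa>"])
      show "(f has_integral s m * (P m - P (Suc m))) {real m * \<kappa>..real (Suc m) * \<kappa>}"
        using piece unfolding val .
      show "(f has_integral (\<Sum>j<m. s j * (P j - P (Suc j)))) {0..real m * \<kappa>}"
        using Suc by simp
    qed (use assms in auto)
    then show ?case by simp
  qed
  have last: "(f has_integral s n * P n) {real n * \<kappa>..\<tau>}"
  proof -
    have "(f has_integral ((\<tau> - real n * \<kappa>) powr (1 - \<beta>) - (\<tau> - \<tau>) powr (1 - \<beta>)) / (1 - \<beta>) * s n)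
        {real n * \<kappa>..\<tau>}"
      unfolding f_def s_def using caputo_piece[of \<kappa> \<beta> n N \<tau> \<tau> u] assms n by simp
    then show ?thesis using Pj[of n] by (simp add: mult.commute)
  qed
  have tot: "(f has_integral (\<Sum>j<n. s j * (P j - P (Suc j))) + s n * P n) {0..\<tau>}"
    by (rule has_integral_combine[of 0 "real n * \<kappa>"]) (use assem[of n] last n assms in auto)
  have abel: "(\<Sum>j<n. s j * (P j - P (Suc j))) + s n * P n
      = (\<Sum>j<Suc n. (if j = 0 then s 0 else s j - s (j - 1)) * P j)"
    by (rule abel_sum)
  also have "\<dots> = (\<Sum>j<N. (if j = 0 then s 0 else s j - s (j - 1)) * P j)"
  proof -
    have "(\<Sum>j<N. (if j = 0 then s 0 else s j - s (j - 1)) * P j)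
       = (\<Sum>j\<in>{0..<Suc n}. (if j = 0 then s 0 else s j - s (j - 1)) * P j)
         + (\<Sum>j\<in>{Suc n..<N}. (if j = 0 then s 0 else s j - s (j - 1)) * P j)"
      unfolding atLeast0LessThan[symmetric]
      by (rule sum.atLeastLessThan_concat[symmetric]) (use n(1) in auto)
    moreover have "(\<Sum>j\<in>{Suc n..<N}. (if j = 0 then s 0 else s j - s (j - 1)) * P j) = 0"
    proof (intro sum.neutral ballI)
      fix j assume "j \<in> {Suc n..<N}"
      then have "real (Suc n) * \<kappa> \<le> real j * \<kappa>" using assms by (simp add: mult_right_mono)
      then have "P j = 0" unfolding P_def using n by (simp add: Phi_nonpos)
      then show "(if j = 0 then s 0 else s j - s (j - 1)) * P j = 0" by simp
    qed
    ultimately show ?thesis by (simp add: atLeast0LessThan)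
  qed
  finally have V: "(\<Sum>j<n. s j * (P j - P (Suc j))) + s n * P n
      = (\<Sum>j<N. (if j = 0 then s 0 else s j - s (j - 1)) * P j)" .
  have "caputo \<beta> (pl_interp \<kappa> N u) \<tau> = (1 / Gamma (1 - \<beta>)) * integral {0..\<tau>} f"
    unfolding caputo_def f_def by simp
  also have "integral {0..\<tau>} f = (\<Sum>j<N. (if j = 0 then s 0 else s j - s (j - 1)) * P j)"
    using integral_unique[OF tot] V by simp
  finally show ?thesis unfolding s_def P_def by simp
qed

lemma bound_cont:
  fixes g :: "real \<Rightarrow> real"
  assumes "continuous_on {a..b} g"
  obtains M where "0 \<le> M" "\<And>x. x \<in> {a..b} \<Longrightarrow> \<bar>g x\<bar> \<le> M"
proof -
  have "bounded (g ` {a..b})" by (rule compact_imp_bounded[OF compact_continuous_image[OF assms compact_Icc]])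
  then obtain M where M: "\<And>y. y \<in> g ` {a..b} \<Longrightarrow> norm y \<le> M" by (auto simp: bounded_iff)
  show ?thesis
  proof (rule that[of "max M 0"])
    fix x assume "x \<in> {a..b}"
    then show "\<bar>g x\<bar> \<le> max M 0" using M[of "g x"] by auto
  qed simp
qed

lemma mvt_in:
  fixes f f' :: "real \<Rightarrow> real"
  assumes der: "\<And>x. x \<in> {0..T} \<Longrightarrow> (f has_real_derivative f' x) (at x within {0..T})"
    and "0 \<le> a" "a \<le> b" "b \<le> T"
  shows "\<exists>\<xi>\<in>{a..b}. f b - f a = f' \<xi> * (b - a)"
proof -
  have "\<exists>x\<in>{a..b}. f b - f a = (\<lambda>h. f' x * h) (b - a)"
  proof (rule mvt_very_simple[OF assms(3)])
    fix x assume "a \<le> x" "x \<le> b"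
    have sub: "{a..b} \<subseteq> {0..T}" using assms by auto
    have xin: "x \<in> {0..T}" using assms \<open>a \<le> x\<close> \<open>x \<le> b\<close> by auto
    have "(f has_real_derivative f' x) (at x within {a..b})"
      by (rule DERIV_subset[OF der[OF xin] sub])
    then show "(f has_derivative (\<lambda>h. f' x * h)) (at x within {a..b})"
      by (simp add: has_field_derivative_def)
  qed
  then show ?thesis by (metis mult.commute)
qed

lemma lip_in:
  fixes f f' :: "real \<Rightarrow> real"
  assumes der: "\<And>x. x \<in> {0..T} \<Longrightarrow> (f has_real_derivative f' x) (at x within {0..T})"
    and M: "\<And>x. x \<in> {0..T} \<Longrightarrow> \<bar>f' x\<bar> \<le> M"
    and "a \<in> {0..T}" "b \<in> {0..T}"
  shows "\<bar>f a - f b\<bar> \<le> M * \<bar>a - b\<bar>"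
proof -
  have *: "\<bar>f y - f x\<bar> \<le> M * \<bar>y - x\<bar>" if "x \<in> {0..T}" "y \<in> {0..T}" "x \<le> y" for x y
  proof -
    have "\<exists>\<xi>\<in>{x..y}. f y - f x = f' \<xi> * (y - x)"
      by (rule mvt_in[OF der]) (use that in auto)
    then obtain \<xi> where \<xi>: "\<xi> \<in> {x..y}" "f y - f x = f' \<xi> * (y - x)" by blast
    have "\<bar>f' \<xi>\<bar> \<le> M" using M \<xi>(1) that by auto
    then show ?thesis using \<xi>(2) that by (simp add: abs_mult mult_right_mono)
  qed
  show ?thesis
  proof (cases "a \<le> b")
    case True then show ?thesis using *[of a b] assms by (simp add: abs_minus_commute)
  next
    case False then show ?thesis using *[of b a] assms by simp
  qed
qed

lemma d_bounds:
  fixes u u' u'' :: "real \<Rightarrow> real" and \<kappa> T M1 M2 :: real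
  assumes d1: "\<And>x. x \<in> {0..T} \<Longrightarrow> (u has_real_derivative u' x) (at x within {0..T})"
    and d2: "\<And>x. x \<in> {0..T} \<Longrightarrow> (u' has_real_derivative u'' x) (at x within {0..T})"
    and M1: "\<And>x. x \<in> {0..T} \<Longrightarrow> \<bar>u' x\<bar> \<le> M1"
    and M2: "\<And>x. x \<in> {0..T} \<Longrightarrow> \<bar>u'' x\<bar> \<le> M2"
    and k: "0 < \<kappa>" "real N * \<kappa> = T"
  defines "s \<equiv> (\<lambda>j. (u (real (Suc j) * \<kappa>) - u (real j * \<kappa>)) / \<kappa>)"
  shows "1 \<le> N \<Longrightarrow> \<bar>s 0\<bar> \<le> M1"
    and "1 \<le> j \<Longrightarrow> j < N \<Longrightarrow> \<bar>s j - s (j - 1)\<bar> \<le> \<kappa> * (2 * M2)"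
proof -
  have sx: "\<exists>\<xi>\<in>{real j * \<kappa>..real (Suc j) * \<kappa>}. s j = u' \<xi>" if "j < N" for j
  proof -
    have "real (Suc j) * \<kappa> \<le> real N * \<kappa>" using that k by (intro mult_right_mono) auto
    then obtain \<xi> where \<xi>: "\<xi> \<in> {real j * \<kappa>..real (Suc j) * \<kappa>}"
      "u (real (Suc j) * \<kappa>) - u (real j * \<kappa>) = u' \<xi> * (real (Suc j) * \<kappa> - real j * \<kappa>)"
      using mvt_in[OF d1, of "real j * \<kappa>" "real (Suc j) * \<kappa>"] k by auto
    have "real (Suc j) * \<kappa> - real j * \<kappa> = \<kappa>" by (simp add: algebra_simps)
    then have "s j = u' \<xi>" using \<xi>(2) k unfolding s_def by simp
    then show ?thesis using \<xi>(1) by blast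
  qed
  have inT: "x \<in> {0..T}" if "x \<in> {real j * \<kappa>..real (Suc j) * \<kappa>}" "j < N" for x j
  proof -
    have h1: "real (Suc j) * \<kappa> \<le> real N * \<kappa>" using that k by (intro mult_right_mono) auto
    have h2: "0 \<le> real j * \<kappa>" using k by simp
    have h3: "real j * \<kappa> \<le> x" "x \<le> real (Suc j) * \<kappa>" using that(1) by auto
    have "0 \<le> x" using h2 h3 by linarith
    moreover have "x \<le> T" using h1 h3 k by linarith
    ultimately show ?thesis by simp
  qed
  show "1 \<le> N \<Longrightarrow> \<bar>s 0\<bar> \<le> M1"
  proof -
    assume "1 \<le> N"
    then obtain \<xi> where "\<xi> \<in> {real 0 * \<kappa>..real (Suc 0) * \<kappa>}" "s 0 = u' \<xi>" using sx[of 0] by auto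
    then show ?thesis using M1 inT[of \<xi> 0] \<open>1 \<le> N\<close> by auto
  qed
  show "1 \<le> j \<Longrightarrow> j < N \<Longrightarrow> \<bar>s j - s (j - 1)\<bar> \<le> \<kappa> * (2 * M2)"
  proof -
    assume j: "1 \<le> j" "j < N"
    obtain \<xi> where \<xi>: "\<xi> \<in> {real j * \<kappa>..real (Suc j) * \<kappa>}" "s j = u' \<xi>" using sx[of j] j by auto
    obtain \<eta> where \<eta>: "\<eta> \<in> {real (j - 1) * \<kappa>..real (Suc (j - 1)) * \<kappa>}" "s (j - 1) = u' \<eta>"
      using sx[of "j - 1"] j by (meson less_imp_diff_less)
    have j1: "j - 1 < N" using j by simp
    have inx: "\<xi> \<in> {0..T}" "\<eta> \<in> {0..T}" using inT[OF \<xi>(1) j(2)] inT[OF \<eta>(1) j1] by auto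
    have "\<bar>u' \<xi> - u' \<eta>\<bar> \<le> M2 * \<bar>\<xi> - \<eta>\<bar>" by (rule lip_in[OF d2 M2 inx])
    moreover have "\<bar>\<xi> - \<eta>\<bar> \<le> 2 * \<kappa>"
    proof -
      have "real (Suc (j - 1)) = real j" "real (j - 1) = real j - 1" using j by auto
      then show ?thesis using \<xi>(1) \<eta>(1) by (auto simp: algebra_simps abs_le_iff)
    qed
    moreover have "0 \<le> M2" using M2[of 0] k by (smt (verit) atLeastAtMost_iff mult_nonneg_nonneg of_nat_0_le_iff)
    ultimately have "\<bar>u' \<xi> - u' \<eta>\<bar> \<le> M2 * (2 * \<kappa>)"
      by (meson mult_left_mono order_trans)
    then show ?thesis using \<xi>(2) \<eta>(2) by (simp add: algebra_simps)
  qed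
qed

lemma half_powr:
  fixes \<tau> \<beta> :: real
  assumes "0 < \<tau>"
  shows "(\<tau> / 2) powr (- 1 - \<beta>) = 2 powr (1 + \<beta>) * \<tau> powr (- 1 - \<beta>)"
proof -
  have "(\<tau> / 2) powr (- 1 - \<beta>) = \<tau> powr (- 1 - \<beta>) / 2 powr (- 1 - \<beta>)"
    using assms by (simp add: powr_divide)
  moreover have "2 powr (- 1 - \<beta>) = inverse (2 powr (1 + \<beta>) :: real)"
    using powr_minus[of "2::real" "1 + \<beta>"] by simp
  ultimately show ?thesis by (simp only: divide_inverse inverse_inverse_eq mult.commute)
qed

lemma pointwise:
  fixes \<kappa> \<beta> \<tau> M1 M2 :: real and N :: nat and u :: "real \<Rightarrow> real"
  assumes k: "0 < \<kappa>" "1 \<le> N" and b: "0 < \<beta>" "\<beta> < 1" and tau: "0 \<le> \<tau>" "\<tau> \<le> real N * \<kappa>"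
    and M: "0 \<le> M1" "0 \<le> M2"
    and d0: "\<bar>(u (real (Suc 0) * \<kappa>) - u (real 0 * \<kappa>)) / \<kappa>\<bar> \<le> M1"
    and dj: "\<And>j. 1 \<le> j \<Longrightarrow> j < N \<Longrightarrow>
       \<bar>(u (real (Suc j) * \<kappa>) - u (real j * \<kappa>)) / \<kappa> - (u (real (Suc (j - 1)) * \<kappa>) - u (real (j - 1) * \<kappa>)) / \<kappa>\<bar> \<le> \<kappa> * M2"
  shows "\<bar>pl_interp \<kappa> N (caputo \<beta> (pl_interp \<kappa> N u)) \<tau> - caputo \<beta> (pl_interp \<kappa> N u) \<tau>\<bar>
     \<le> \<bar>1 / Gamma (1 - \<beta>)\<bar> * ((if \<tau> \<le> \<kappa> then M1 * (\<kappa> powr (1 - \<beta>) / (1 - \<beta>)) else 0)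
         + M2 * \<kappa> powr (2 - \<beta>) * (1 / (1 - \<beta>) + 1)
         + (if \<kappa> \<le> \<tau> then M1 * \<beta> * 2 powr (1 + \<beta>) * \<kappa> * \<kappa> * \<tau> powr (- 1 - \<beta>) else 0))"
proof -
  define s where "s = (\<lambda>j. (u (real (Suc j) * \<kappa>) - u (real j * \<kappa>)) / \<kappa>)"
  define D where "D = (\<lambda>j. if j = 0 then s 0 else s j - s (j - 1))"
  define c where "c = 1 / Gamma (1 - \<beta>)"
  define g where "g = caputo \<beta> (pl_interp \<kappa> N u)"
  have gform: "g y = c * (\<Sum>j<N. D j * Phi \<beta> (y - real j * \<kappa>))" if "0 \<le> y" "y \<le> real N * \<kappa>" for y
    using caputo_uh[OF k b that, of u] unfolding g_def c_def D_def s_def by simp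
  define n where "n = min (nat \<lfloor>\<tau> / \<kappa>\<rfloor>) (N - 1)"
  have n: "n < N" "real n * \<kappa> \<le> \<tau>" "\<tau> \<le> real (Suc n) * \<kappa>"
    using pl_index[OF k tau] unfolding n_def by auto
  define x where "x = \<tau> - real n * \<kappa>"
  have x: "0 \<le> x" "x \<le> \<kappa>" using n unfolding x_def by (auto simp: algebra_simps)
  have tn: "0 \<le> real n * \<kappa>" "real n * \<kappa> \<le> real N * \<kappa>" "0 \<le> real (Suc n) * \<kappa>" "real (Suc n) * \<kappa> \<le> real N * \<kappa>"
    using n k by (auto intro!: mult_right_mono simp del: of_nat_Suc)
  define E where "E = (\<lambda>j. Phi \<beta> ((real n - real j) * \<kappa>)
            + x / \<kappa> * (Phi \<beta> ((real n - real j) * \<kappa> + \<kappa>) - Phi \<beta> ((real n - real j) * \<kappa>))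
            - Phi \<beta> ((real n - real j) * \<kappa> + x))"
  have pl: "pl_interp \<kappa> N g \<tau> = g (real n * \<kappa>) + x / \<kappa> * (g (real (Suc n) * \<kappa>) - g (real n * \<kappa>))"
    unfolding pl_interp_eq Let_def n_def[symmetric] x_def by simp
  have a1: "real n * \<kappa> - real j * \<kappa> = (real n - real j) * \<kappa>" for j by (simp add: algebra_simps)
  have a2: "real (Suc n) * \<kappa> - real j * \<kappa> = (real n - real j) * \<kappa> + \<kappa>" for j by (simp add: algebra_simps)
  have a3: "\<tau> - real j * \<kappa> = (real n - real j) * \<kappa> + x" for j unfolding x_def by (simp add: algebra_simps)
  have diff: "pl_interp \<kappa> N g \<tau> - g \<tau> = c * (\<Sum>j<N. D j * E j)"
  proof -
    have "pl_interp \<kappa> N g \<tau> - g \<tau> =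
       c * (\<Sum>j<N. D j * Phi \<beta> ((real n - real j) * \<kappa>))
       + x / \<kappa> * (c * (\<Sum>j<N. D j * Phi \<beta> ((real n - real j) * \<kappa> + \<kappa>)) - c * (\<Sum>j<N. D j * Phi \<beta> ((real n - real j) * \<kappa>)))
       - c * (\<Sum>j<N. D j * Phi \<beta> ((real n - real j) * \<kappa> + x))"
      unfolding pl gform[OF tn(1,2)] gform[OF tn(3,4)] gform[OF tau] a1 a2 a3 by simp
    also have "\<dots> = c * (\<Sum>j<N. D j * E j)"
      unfolding E_def by (simp add: sum_distrib_left sum_subtractf sum.distrib algebra_simps)
    finally show ?thesis .
  qed
  have h1: "\<bar>pl_interp \<kappa> N g \<tau> - g \<tau>\<bar> \<le> \<bar>c\<bar> * (\<Sum>j<N. \<bar>D j\<bar> * \<bar>E j\<bar>)"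
  proof -
    have "\<bar>\<Sum>j<N. D j * E j\<bar> \<le> (\<Sum>j<N. \<bar>D j * E j\<bar>)" by (rule sum_abs)
    then show ?thesis unfolding diff abs_mult by (simp add: mult_left_mono)
  qed
  have h2: "(\<Sum>j<N. \<bar>D j\<bar> * \<bar>E j\<bar>) \<le> (if n = 0 then M1 * (\<kappa> powr (1 - \<beta>) / (1 - \<beta>))
            else M1 * (\<beta> * \<kappa> * \<kappa> * (real n * \<kappa>) powr (- 1 - \<beta>))
                 + M2 * \<kappa> powr (2 - \<beta>) * (1 / (1 - \<beta>) + 1))"
    unfolding E_def
  proof (rule sum_err_bound[OF k(1) b x n(1)])
    show "\<bar>D 0\<bar> \<le> M1" using d0 unfolding D_def s_def by simp
    fix j assume "1 \<le> j" "j < N"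
    then show "\<bar>D j\<bar> \<le> \<kappa> * M2" using dj[of j] unfolding D_def s_def by simp
  qed
  have h3: "(if n = 0 then M1 * (\<kappa> powr (1 - \<beta>) / (1 - \<beta>))
            else M1 * (\<beta> * \<kappa> * \<kappa> * (real n * \<kappa>) powr (- 1 - \<beta>))
                 + M2 * \<kappa> powr (2 - \<beta>) * (1 / (1 - \<beta>) + 1)) \<le> (if \<tau> \<le> \<kappa> then M1 * (\<kappa> powr (1 - \<beta>) / (1 - \<beta>)) else 0)
         + M2 * \<kappa> powr (2 - \<beta>) * (1 / (1 - \<beta>) + 1)
         + (if \<kappa> \<le> \<tau> then M1 * \<beta> * 2 powr (1 + \<beta>) * \<kappa> * \<kappa> * \<tau> powr (- 1 - \<beta>) else 0)"
    (is "_ \<le> ?A + ?B + ?D")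
  proof -
    have A0: "0 \<le> ?A" using M b by simp
    have B0: "0 \<le> ?B" using M b by simp
    have D0: "0 \<le> ?D" using M b k by simp
    show ?thesis
    proof (cases "n = 0")
      case True
      then have "\<tau> \<le> \<kappa>" using n by simp
      then show ?thesis using True B0 D0 by simp
    next
      case False
      then have "1 \<le> real n" by simp
      then have kt: "\<kappa> \<le> \<tau>" using n k by (smt (verit) mult_le_cancel_right1)
      have tp: "0 < \<tau>" using kt k by simp
      have "\<kappa> \<le> real n * \<kappa>" using \<open>1 \<le> real n\<close> k by simp
      moreover have "\<tau> \<le> real n * \<kappa> + \<kappa>" using n(3) by (simp add: algebra_simps)
      ultimately have half: "\<tau> / 2 \<le> real n * \<kappa>" by linarith
      have "(real n * \<kappa>) powr (- 1 - \<beta>) \<le> (\<tau> / 2) powr (- 1 - \<beta>)"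
        by (rule powr_mono2') (use b tp half in auto)
      also have "\<dots> = 2 powr (1 + \<beta>) * \<tau> powr (- 1 - \<beta>)" by (rule half_powr[OF tp])
      finally have "M1 * (\<beta> * \<kappa> * \<kappa> * (real n * \<kappa>) powr (- 1 - \<beta>)) \<le> M1 * (\<beta> * \<kappa> * \<kappa> * (2 powr (1 + \<beta>) * \<tau> powr (- 1 - \<beta>)))"
        using M b k by (intro mult_left_mono) auto
      then show ?thesis using False kt A0 by (simp add: algebra_simps)
    qed
  qed
  from mult_left_mono[OF order_trans[OF h2 h3] abs_ge_zero[of c]] h1
  show ?thesis unfolding g_def c_def by linarith
qed

lemma restrict_int:
  fixes f :: "real \<Rightarrow> real"
  assumes "(f has_integral i) {c..d}" "a \<le> c" "d \<le> b"
  shows "((\<lambda>x. if x \<in> {c..d} then f x else 0) has_integral i) {a..b}"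
proof (cases "c \<le> d")
  case True
  have sub: "cbox c d \<subseteq> cbox a b" using assms True by auto
  show ?thesis using has_integral_restrict_closed_subinterval[of f i c d a b] assms(1) sub by simp
next
  case False
  then have "{c..d} = {}" by simp
  moreover have "i = 0" using assms(1) \<open>{c..d} = {}\<close> by simp
  ultimately show ?thesis by simp
qed

lemma outer:
  fixes t \<kappa> \<beta> A B D :: real and F :: "real \<Rightarrow> real"
  assumes k: "0 < \<kappa>" "\<kappa> < t" and b: "0 < \<beta>" "\<beta> < 1"
    and nn: "0 \<le> A" "0 \<le> B" "0 \<le> D"
    and Fb: "\<And>\<tau>. \<tau> \<in> {0..t} \<Longrightarrow> F \<tau> \<le> (t - \<tau>) powr (\<beta> - 1) *
        ((if \<tau> \<le> \<kappa> then A else 0) + B + (if \<kappa> \<le> \<tau> then D * \<tau> powr (- 1 - \<beta>) else 0))"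
  defines "s \<equiv> max \<kappa> (t / 2)"
  shows "integral {0..t} F \<le> A * (t - \<kappa>) powr (\<beta> - 1) * \<kappa> + B * (t powr \<beta> / \<beta>)
     + D * (t - s) powr (\<beta> - 1) * ((\<kappa> powr (-\<beta>) - s powr (-\<beta>)) / \<beta>)
     + D * (t / 2) powr (- 1 - \<beta>) * ((t - s) powr \<beta> / \<beta>)"
proof -
  have s: "\<kappa> \<le> s" "t / 2 \<le> s" "s < t" unfolding s_def using k by auto
  define P1 where "P1 = (\<lambda>\<tau>. if \<tau> \<in> {0..\<kappa>} then A * (t - \<kappa>) powr (\<beta> - 1) else 0)"
  define P2 where "P2 = (\<lambda>\<tau>::real. B * (t - \<tau>) powr (\<beta> - 1))"
  define P3 where "P3 = (\<lambda>\<tau>. if \<tau> \<in> {\<kappa>..s} then D * (t - s) powr (\<beta> - 1) * \<tau> powr (- 1 - \<beta>) else 0)"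
  define P4 where "P4 = (\<lambda>\<tau>. if \<tau> \<in> {s..t} then D * (t / 2) powr (- 1 - \<beta>) * (t - \<tau>) powr (\<beta> - 1) else 0)"
  define V where "V = A * (t - \<kappa>) powr (\<beta> - 1) * \<kappa> + B * (t powr \<beta> / \<beta>)
     + D * (t - s) powr (\<beta> - 1) * ((\<kappa> powr (-\<beta>) - s powr (-\<beta>)) / \<beta>)
     + D * (t / 2) powr (- 1 - \<beta>) * ((t - s) powr \<beta> / \<beta>)"
  have i1: "(P1 has_integral A * (t - \<kappa>) powr (\<beta> - 1) * \<kappa>) {0..t}"
  proof -
    have "((\<lambda>\<tau>. A * (t - \<kappa>) powr (\<beta> - 1)) has_integral A * (t - \<kappa>) powr (\<beta> - 1) * \<kappa>) {0..\<kappa>}"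
      using has_integral_const_real[of "A * (t - \<kappa>) powr (\<beta> - 1)" 0 \<kappa>] k by (simp add: mult.commute)
    then show ?thesis unfolding P1_def by (rule restrict_int) (use k in auto)
  qed
  have i2: "(P2 has_integral B * (t powr \<beta> / \<beta>)) {0..t}"
  proof -
    have "((\<lambda>\<tau>. (t - \<tau>) powr (\<beta> - 1)) has_integral ((t - 0) powr \<beta> - (t - t) powr \<beta>) / \<beta>) {0..t}"
      by (rule int_sing) (use b k in auto)
    from has_integral_mult_right[OF this, of B] show ?thesis unfolding P2_def using b by simp
  qed
  have i3: "(P3 has_integral D * (t - s) powr (\<beta> - 1) * ((\<kappa> powr (-\<beta>) - s powr (-\<beta>)) / \<beta>)) {0..t}"
  proof -
    have "((\<lambda>\<tau>. \<tau> powr (- 1 - \<beta>)) has_integral ((\<kappa> powr (-\<beta>) - s powr (-\<beta>)) / \<beta>)) {\<kappa>..s}"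
      by (rule int_reg) (use b k s in auto)
    then have "((\<lambda>\<tau>. D * (t - s) powr (\<beta> - 1) * \<tau> powr (- 1 - \<beta>)) has_integral
        D * (t - s) powr (\<beta> - 1) * ((\<kappa> powr (-\<beta>) - s powr (-\<beta>)) / \<beta>)) {\<kappa>..s}"
      by (rule has_integral_mult_right)
    then show ?thesis unfolding P3_def by (rule restrict_int) (use k s in auto)
  qed
  have i4: "(P4 has_integral D * (t / 2) powr (- 1 - \<beta>) * ((t - s) powr \<beta> / \<beta>)) {0..t}"
  proof -
    have "((\<lambda>\<tau>. (t - \<tau>) powr (\<beta> - 1)) has_integral ((t - s) powr \<beta> - (t - t) powr \<beta>) / \<beta>) {s..t}"
      by (rule int_sing) (use b s in auto)
    from has_integral_mult_right[OF this, of "D * (t / 2) powr (- 1 - \<beta>)"]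
    have "((\<lambda>\<tau>. D * (t / 2) powr (- 1 - \<beta>) * (t - \<tau>) powr (\<beta> - 1)) has_integral
        D * (t / 2) powr (- 1 - \<beta>) * ((t - s) powr \<beta> / \<beta>)) {s..t}"
      using b by simp
    then show ?thesis unfolding P4_def by (rule restrict_int) (use k s in auto)
  qed
  have iG: "((\<lambda>\<tau>. P1 \<tau> + P2 \<tau> + P3 \<tau> + P4 \<tau>) has_integral V) {0..t}"
    unfolding V_def by (intro has_integral_add i1 i2 i3 i4)
  have le: "F \<tau> \<le> P1 \<tau> + P2 \<tau> + P3 \<tau> + P4 \<tau>" if \<tau>: "\<tau> \<in> {0..t}" for \<tau>
  proof -
    define w where "w = (t - \<tau>) powr (\<beta> - 1)"
    have w0: "0 \<le> w" unfolding w_def by simp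
    have p0: "0 \<le> P1 \<tau>" "0 \<le> P3 \<tau>" "0 \<le> P4 \<tau>" unfolding P1_def P3_def P4_def using nn by auto
    have q1: "w * (if \<tau> \<le> \<kappa> then A else 0) \<le> P1 \<tau>"
    proof (cases "\<tau> \<le> \<kappa>")
      case True
      have "w \<le> (t - \<kappa>) powr (\<beta> - 1)" unfolding w_def
        by (rule powr_mono2') (use True k b in auto)
      then have "w * A \<le> (t - \<kappa>) powr (\<beta> - 1) * A" by (rule mult_right_mono[OF _ nn(1)])
      moreover have "P1 \<tau> = A * (t - \<kappa>) powr (\<beta> - 1)" using True \<tau> unfolding P1_def by simp
      moreover have "(t - \<kappa>) powr (\<beta> - 1) * A = A * (t - \<kappa>) powr (\<beta> - 1)" by (rule mult.commute)
      ultimately show ?thesis using True by simp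
    next
      case False then show ?thesis using p0 by simp
    qed
    have q2: "w * B = P2 \<tau>" unfolding P2_def w_def by simp
    have q3: "w * (if \<kappa> \<le> \<tau> then D * \<tau> powr (- 1 - \<beta>) else 0) \<le> P3 \<tau> + P4 \<tau>"
    proof (cases "\<kappa> \<le> \<tau>")
      case False then show ?thesis using p0 by simp
    next
      case True
      show ?thesis
      proof (cases "\<tau> \<le> s")
        case True2: True
        have "w \<le> (t - s) powr (\<beta> - 1)" unfolding w_def
          by (rule powr_mono2') (use True2 s b in auto)
        then have "w * (D * \<tau> powr (- 1 - \<beta>)) \<le> (t - s) powr (\<beta> - 1) * (D * \<tau> powr (- 1 - \<beta>))"
          using nn by (intro mult_right_mono) auto
        then have "w * (D * \<tau> powr (- 1 - \<beta>)) \<le> P3 \<tau>"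
          unfolding P3_def using True True2 by (simp add: algebra_simps)
        then show ?thesis using True p0 by simp
      next
        case False2: False
        have tp: "0 < t / 2" using k by simp
        have "\<tau> powr (- 1 - \<beta>) \<le> (t / 2) powr (- 1 - \<beta>)"
          by (rule powr_mono2') (use False2 s b tp in auto)
        then have "w * (D * \<tau> powr (- 1 - \<beta>)) \<le> w * (D * (t / 2) powr (- 1 - \<beta>))"
          using nn w0 by (intro mult_left_mono) auto
        then have "w * (D * \<tau> powr (- 1 - \<beta>)) \<le> P4 \<tau>"
          unfolding P4_def w_def using \<tau> False2 by (simp add: algebra_simps)
        then show ?thesis using True p0 by simp
      qed
    qed
    have "F \<tau> \<le> w * (if \<tau> \<le> \<kappa> then A else 0) + w * B + w * (if \<kappa> \<le> \<tau> then D * \<tau> powr (- 1 - \<beta>) else 0)"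
      using Fb[OF \<tau>] unfolding w_def by (simp add: distrib_left)
    then show ?thesis using q1 q2 q3 by linarith
  qed
  have V0: "0 \<le> V"
  proof -
    have "0 \<le> P1 \<tau> + P2 \<tau> + P3 \<tau> + P4 \<tau>" for \<tau>
      unfolding P1_def P2_def P3_def P4_def using nn by auto
    then show ?thesis using has_integral_nonneg[OF iG] by auto
  qed
  show ?thesis
  proof (cases "F integrable_on {0..t}")
    case True
    then have "integral {0..t} F \<le> V"
      using has_integral_le[OF integrable_integral[OF True] iG le] by simp
    then show ?thesis unfolding V_def .
  next
    case False
    then have "integral {0..t} F = 0" by (rule not_integrable_integral)
    then show ?thesis using V0 unfolding V_def by simp
  qed
qed

lemma powr_split:
  fixes x a b :: real
  assumes "a + b = c"
  shows "x powr c = x powr a * x powr b"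
  using powr_add[of x a b] assms by simp

lemma final_alg:
  fixes \<kappa> t T \<beta> a1 b1 d1 :: real
  assumes k: "0 < \<kappa>" "\<kappa> < t" "t \<le> T" and b: "0 < \<beta>" "\<beta> < 1"
    and nn: "0 \<le> a1" "0 \<le> b1" "0 \<le> d1"
  defines "s \<equiv> max \<kappa> (t / 2)"
  shows "(a1 * \<kappa> powr (1 - \<beta>)) * (t - \<kappa>) powr (\<beta> - 1) * \<kappa> + (b1 * \<kappa> powr (2 - \<beta>)) * (t powr \<beta> / \<beta>)
     + (d1 * \<kappa> * \<kappa>) * (t - s) powr (\<beta> - 1) * ((\<kappa> powr (-\<beta>) - s powr (-\<beta>)) / \<beta>)
     + (d1 * \<kappa> * \<kappa>) * (t / 2) powr (- 1 - \<beta>) * ((t - s) powr \<beta> / \<beta>)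
     \<le> (a1 + b1 * T / \<beta> + 4 * d1 / \<beta>) * \<kappa> powr (2 - \<beta>) * (t - \<kappa>) powr (\<beta> - 1)"
proof -
  define K where "K = \<kappa> powr (2 - \<beta>)"
  define W where "W = (t - \<kappa>) powr (\<beta> - 1)"
  have K0: "0 \<le> K" and W0: "0 \<le> W" unfolding K_def W_def by simp_all
  have s: "\<kappa> \<le> s" "t / 2 \<le> s" "s < t" "(t - \<kappa>) / 2 \<le> t - s" unfolding s_def using k by auto
  have tp: "0 < t" "0 < T" "0 < t - \<kappa>" using k by auto
  have f1: "\<kappa> powr (1 - \<beta>) * \<kappa> = K"
    unfolding K_def using powr_split[of "1 - \<beta>" 1 "2 - \<beta>" \<kappa>] k by (simp add: powr_one)
  have f2: "t powr \<beta> \<le> T * W"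
  proof -
    have "t powr \<beta> \<le> T powr \<beta>" by (rule powr_mono2) (use k b in auto)
    also have "T powr \<beta> = T * T powr (\<beta> - 1)"
      using powr_split[of 1 "\<beta> - 1" \<beta> T] tp by (simp add: powr_one)
    also have "T powr (\<beta> - 1) \<le> W" unfolding W_def
      by (rule powr_mono2') (use b k in auto)
    finally show ?thesis using tp by (simp add: mult_left_mono)
  qed
  have f3a: "(t - s) powr (\<beta> - 1) \<le> 2 * W"
  proof -
    have "(t - s) powr (\<beta> - 1) \<le> ((t - \<kappa>) / 2) powr (\<beta> - 1)"
      by (rule powr_mono2') (use b s tp in auto)
    also have "\<dots> = W / 2 powr (\<beta> - 1)" unfolding W_def by (rule powr_divide)
    also have "\<dots> \<le> 2 * W"
    proof -
      have "(2::real) powr (-1) \<le> 2 powr (\<beta> - 1)" by (rule powr_mono) (use b in auto)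
      then have h: "1 / 2 \<le> (2::real) powr (\<beta> - 1)" by simp
      have "2 * W * (1 / 2) \<le> 2 * W * 2 powr (\<beta> - 1)" using mult_left_mono[OF h, of "2 * W"] W0 by simp
      then have "W \<le> 2 * W * 2 powr (\<beta> - 1)" by simp
      then show ?thesis by (simp add: divide_le_eq)
    qed
    finally show ?thesis .
  qed
  have f3b: "\<kappa> * \<kappa> * \<kappa> powr (-\<beta>) = K"
  proof -
    have "\<kappa> powr (2 - \<beta>) = \<kappa> powr 2 * \<kappa> powr (-\<beta>)" using powr_split[of 2 "-\<beta>" "2 - \<beta>" \<kappa>] by simp
    then show ?thesis unfolding K_def using k by (simp add: power2_eq_square)
  qed
  have f3: "(d1 * \<kappa> * \<kappa>) * (t - s) powr (\<beta> - 1) * ((\<kappa> powr (-\<beta>) - s powr (-\<beta>)) / \<beta>) \<le> d1 * K * (2 * W) / \<beta>"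
  proof -
    have m1: "\<kappa> powr (-\<beta>) - s powr (-\<beta>) \<le> \<kappa> powr (-\<beta>)" by simp
    have m2: "0 \<le> \<kappa> powr (-\<beta>) - s powr (-\<beta>)" using powr_mono2'[of "-\<beta>" \<kappa> s] b k s by simp
    have "(t - s) powr (\<beta> - 1) * (\<kappa> powr (-\<beta>) - s powr (-\<beta>)) \<le> (2 * W) * \<kappa> powr (-\<beta>)"
      using mult_mono[OF f3a m1 _ m2] W0 by simp
    then have "(d1 * \<kappa> * \<kappa>) * ((t - s) powr (\<beta> - 1) * (\<kappa> powr (-\<beta>) - s powr (-\<beta>))) \<le> (d1 * \<kappa> * \<kappa>) * ((2 * W) * \<kappa> powr (-\<beta>))"
      by (rule mult_left_mono) (use nn k in auto)
    also have "\<dots> = d1 * (\<kappa> * \<kappa> * \<kappa> powr (-\<beta>)) * (2 * W)" by (simp add: algebra_simps)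
    finally have "(d1 * \<kappa> * \<kappa>) * ((t - s) powr (\<beta> - 1) * (\<kappa> powr (-\<beta>) - s powr (-\<beta>))) \<le> d1 * K * (2 * W)"
      unfolding f3b .
    then show ?thesis using b by (simp add: divide_right_mono mult.assoc)
  qed
  have f4: "(d1 * \<kappa> * \<kappa>) * (t / 2) powr (- 1 - \<beta>) * ((t - s) powr \<beta> / \<beta>) \<le> d1 * (2 * K * W) / \<beta>"
  proof -
    have "(t - s) powr \<beta> \<le> (t / 2) powr \<beta>" by (rule powr_mono2) (use b s in auto)
    then have "(t / 2) powr (- 1 - \<beta>) * (t - s) powr \<beta> \<le> (t / 2) powr (- 1 - \<beta>) * (t / 2) powr \<beta>"
      by (rule mult_left_mono) auto
    also have "\<dots> = (t / 2) powr (-1)" using powr_split[of "- 1 - \<beta>" \<beta> "-1" "t / 2"] by simp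
    also have "\<dots> = 2 / t" using tp by (simp add: powr_neg_one)
    finally have a: "(t / 2) powr (- 1 - \<beta>) * (t - s) powr \<beta> \<le> 2 / t" .
    have kk: "\<kappa> * \<kappa> = K * \<kappa> powr \<beta>"
    proof -
      have "\<kappa> powr 2 = \<kappa> powr (2 - \<beta>) * \<kappa> powr \<beta>" using powr_split[of "2 - \<beta>" \<beta> 2 \<kappa>] by simp
      then show ?thesis unfolding K_def using k by (simp add: power2_eq_square)
    qed
    have p1: "\<kappa> powr \<beta> \<le> t powr \<beta>" by (rule powr_mono2) (use k b in auto)
    have p2: "t powr \<beta> / t = t powr (\<beta> - 1)"
      using powr_diff[of t \<beta> 1] tp by (simp add: powr_one)
    have p3: "t powr (\<beta> - 1) \<le> W" unfolding W_def by (rule powr_mono2') (use b k in auto)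
    have "\<kappa> powr \<beta> / t \<le> W" using divide_right_mono[OF p1, of t] tp p2 p3 by simp
    then have "K * (\<kappa> powr \<beta> / t) \<le> K * W" by (rule mult_left_mono) (use K0 in auto)
    moreover have "\<kappa> * \<kappa> / t = K * (\<kappa> powr \<beta> / t)" unfolding kk by simp
    ultimately have b2: "\<kappa> * \<kappa> / t \<le> K * W" by linarith
    have "(d1 * \<kappa> * \<kappa>) * ((t / 2) powr (- 1 - \<beta>) * (t - s) powr \<beta>) \<le> (d1 * \<kappa> * \<kappa>) * (2 / t)"
      by (rule mult_left_mono) (use a nn k in auto)
    also have "\<dots> = 2 * d1 * (\<kappa> * \<kappa> / t)" by simp
    also have "\<dots> \<le> 2 * d1 * (K * W)" by (rule mult_left_mono) (use b2 nn in auto)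
    finally have "(d1 * \<kappa> * \<kappa>) * ((t / 2) powr (- 1 - \<beta>) * (t - s) powr \<beta>) \<le> d1 * (2 * K * W)"
      by (simp add: algebra_simps)
    then show ?thesis using b by (simp add: divide_right_mono mult.assoc)
  qed
  have t1: "(a1 * \<kappa> powr (1 - \<beta>)) * (t - \<kappa>) powr (\<beta> - 1) * \<kappa> = a1 * K * W"
    using f1 unfolding W_def by (simp add: algebra_simps)
  have t2: "(b1 * \<kappa> powr (2 - \<beta>)) * (t powr \<beta> / \<beta>) \<le> b1 * K * (T * W) / \<beta>"
    unfolding K_def[symmetric] using f2 nn K0 b
    by (simp add: divide_right_mono mult_left_mono)
  have "(a1 + b1 * T / \<beta> + 4 * d1 / \<beta>) * K * W = a1 * K * W + b1 * K * (T * W) / \<beta> + d1 * K * (2 * W) / \<beta> + d1 * (2 * K * W) / \<beta>"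
    by (simp add: algebra_simps add_divide_distrib)
  then show ?thesis using t1 t2 f3 f4 unfolding K_def W_def by linarith
qed

theorem lemma5p6:
  fixes \<beta> T :: real and u u' u'' :: "real \<Rightarrow> real"
  assumes "0 < \<beta>" "\<beta> < 1" "0 < T"
    and "\<And>x. x \<in> {0..T} \<Longrightarrow> (u has_real_derivative u' x) (at x within {0..T})"
    and "\<And>x. x \<in> {0..T} \<Longrightarrow> (u' has_real_derivative u'' x) (at x within {0..T})"
    and "continuous_on {0..T} u''"
  shows "\<exists>C. \<forall>N::nat. N \<ge> 1 \<longrightarrow>
           (let \<kappa> = T / real N;
                uh = pl_interp \<kappa> N u
            in \<forall>t. \<kappa> < t \<and> t \<le> T \<longrightarrow>
                 integral {0..t} (\<lambda>\<tau>. (t - \<tau>) powr (\<beta> - 1) *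
                    \<bar>pl_interp \<kappa> N (caputo \<beta> uh) \<tau> - caputo \<beta> uh \<tau>\<bar>)
                 \<le> C * \<kappa> powr (2 - \<beta>) * (t - \<kappa>) powr (\<beta> - 1))"
proof -
  note b = assms(1,2)
  have cu': "continuous_on {0..T} u'" by (rule DERIV_continuous_on[OF assms(5)])
  obtain M1 where M1: "0 \<le> M1" "\<And>x. x \<in> {0..T} \<Longrightarrow> \<bar>u' x\<bar> \<le> M1"
    using bound_cont[OF cu'] by blast
  obtain M2 where M2: "0 \<le> M2" "\<And>x. x \<in> {0..T} \<Longrightarrow> \<bar>u'' x\<bar> \<le> M2"
    using bound_cont[OF assms(6)] by blast
  define c where "c = \<bar>1 / Gamma (1 - \<beta>)\<bar>"
  define a1 where "a1 = c * M1 / (1 - \<beta>)"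
  define b1 where "b1 = c * (2 * M2) * (1 / (1 - \<beta>) + 1)"
  define d1 where "d1 = c * M1 * \<beta> * 2 powr (1 + \<beta>)"
  have c0: "0 \<le> c" unfolding c_def by simp
  have nn: "0 \<le> a1" "0 \<le> b1" "0 \<le> d1"
    unfolding a1_def b1_def d1_def using c0 M1 M2 b by simp_all
  define C where "C = a1 + b1 * T / \<beta> + 4 * d1 / \<beta>"
  show ?thesis
  proof (rule exI[of _ C], intro allI impI)
    fix N :: nat assume N: "N \<ge> 1"
    define \<kappa> where "\<kappa> = T / real N"
    have k: "0 < \<kappa>" "real N * \<kappa> = T" unfolding \<kappa>_def using N assms(3) by auto
    define uh where "uh = pl_interp \<kappa> N u"
    have main: "integral {0..t} (\<lambda>\<tau>. (t - \<tau>) powr (\<beta> - 1) *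
                    \<bar>pl_interp \<kappa> N (caputo \<beta> uh) \<tau> - caputo \<beta> uh \<tau>\<bar>)
                 \<le> C * \<kappa> powr (2 - \<beta>) * (t - \<kappa>) powr (\<beta> - 1)" if t: "\<kappa> < t" "t \<le> T" for t
    proof -
      define A where "A = a1 * \<kappa> powr (1 - \<beta>)"
      define B where "B = b1 * \<kappa> powr (2 - \<beta>)"
      define D where "D = d1 * \<kappa> * \<kappa>"
      have ABD: "0 \<le> A" "0 \<le> B" "0 \<le> D" unfolding A_def B_def D_def using nn k by simp_all
      have db0: "\<bar>(u (real (Suc 0) * \<kappa>) - u (real 0 * \<kappa>)) / \<kappa>\<bar> \<le> M1"
        using d_bounds(1)[OF assms(4,5) M1(2) M2(2) k N] by simp
      have dbj: "\<bar>(u (real (Suc j) * \<kappa>) - u (real j * \<kappa>)) / \<kappa> - (u (real (Suc (j - 1)) * \<kappa>) - u (real (j - 1) * \<kappa>)) / \<kappa>\<bar> \<le> \<kappa> * (2 * M2)"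
        if "1 \<le> j" "j < N" for j
        using d_bounds(2)[OF assms(4,5) M1(2) M2(2) k, of j] that by simp
      have Fb: "(t - \<tau>) powr (\<beta> - 1) * \<bar>pl_interp \<kappa> N (caputo \<beta> uh) \<tau> - caputo \<beta> uh \<tau>\<bar>
          \<le> (t - \<tau>) powr (\<beta> - 1) * ((if \<tau> \<le> \<kappa> then A else 0) + B + (if \<kappa> \<le> \<tau> then D * \<tau> powr (- 1 - \<beta>) else 0))"
        if \<tau>: "\<tau> \<in> {0..t}" for \<tau>
      proof -
        have \<tau>': "0 \<le> \<tau>" "\<tau> \<le> real N * \<kappa>" using \<tau> t k by auto
        have M2': "0 \<le> 2 * M2" using M2 by simp
        have pw: "\<bar>pl_interp \<kappa> N (caputo \<beta> uh) \<tau> - caputo \<beta> uh \<tau>\<bar>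
           \<le> c * ((if \<tau> \<le> \<kappa> then M1 * (\<kappa> powr (1 - \<beta>) / (1 - \<beta>)) else 0)
              + (2 * M2) * \<kappa> powr (2 - \<beta>) * (1 / (1 - \<beta>) + 1)
              + (if \<kappa> \<le> \<tau> then M1 * \<beta> * 2 powr (1 + \<beta>) * \<kappa> * \<kappa> * \<tau> powr (- 1 - \<beta>) else 0))"
          unfolding uh_def c_def
          by (rule pointwise[OF k(1) N b \<tau>' M1(1) M2' db0 dbj])
        have eq: "c * ((if \<tau> \<le> \<kappa> then M1 * (\<kappa> powr (1 - \<beta>) / (1 - \<beta>)) else 0)
              + (2 * M2) * \<kappa> powr (2 - \<beta>) * (1 / (1 - \<beta>) + 1)
              + (if \<kappa> \<le> \<tau> then M1 * \<beta> * 2 powr (1 + \<beta>) * \<kappa> * \<kappa> * \<tau> powr (- 1 - \<beta>) else 0))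
           = (if \<tau> \<le> \<kappa> then A else 0) + B + (if \<kappa> \<le> \<tau> then D * \<tau> powr (- 1 - \<beta>) else 0)"
          unfolding A_def B_def D_def a1_def b1_def d1_def by (simp add: algebra_simps)
        show ?thesis using pw unfolding eq by (rule mult_left_mono) simp
      qed
      have "integral {0..t} (\<lambda>\<tau>. (t - \<tau>) powr (\<beta> - 1) * \<bar>pl_interp \<kappa> N (caputo \<beta> uh) \<tau> - caputo \<beta> uh \<tau>\<bar>)
         \<le> A * (t - \<kappa>) powr (\<beta> - 1) * \<kappa> + B * (t powr \<beta> / \<beta>)
     + D * (t - max \<kappa> (t / 2)) powr (\<beta> - 1) * ((\<kappa> powr (-\<beta>) - max \<kappa> (t / 2) powr (-\<beta>)) / \<beta>)
     + D * (t / 2) powr (- 1 - \<beta>) * ((t - max \<kappa> (t / 2)) powr \<beta> / \<beta>)"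
        by (rule outer[OF k(1) t(1) b ABD Fb])
      also have "\<dots> \<le> (a1 + b1 * T / \<beta> + 4 * d1 / \<beta>) * \<kappa> powr (2 - \<beta>) * (t - \<kappa>) powr (\<beta> - 1)"
        unfolding A_def B_def D_def by (rule final_alg[OF k(1) t b nn])
      finally show ?thesis unfolding C_def .
    qed
    show "let \<kappa> = T / real N; uh = pl_interp \<kappa> N u
          in \<forall>t. \<kappa> < t \<and> t \<le> T \<longrightarrow>
                 integral {0..t} (\<lambda>\<tau>. (t - \<tau>) powr (\<beta> - 1) *
                    \<bar>pl_interp \<kappa> N (caputo \<beta> uh) \<tau> - caputo \<beta> uh \<tau>\<bar>)
                 \<le> C * \<kappa> powr (2 - \<beta>) * (t - \<kappa>) powr (\<beta> - 1)"
      unfolding Let_def \<kappa>_def[symmetric] uh_def[symmetric] using main by blast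
  qed
qed

end
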